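(* Let $r\ge1$ and $n\ge1$ be integers and let $\mathcal P(n-1,r,r+1)$ be the set of lattice paths with steps $(1,1)$ (up) and $(1,-r)$ (down) from $(0,0)$ to $((r+1)n,r+1)$ (so with $rn+1$ up steps and $n-1$ down steps); the steps occupy positions $0,1,\dots,(r+1)n-1$, the step in position $m$ starting at the vertex reached after $m$ steps. (1) Let $n_0,\dots,n_r$ be positive integers with $n_0\ge2$ and $\sum_{i=0}^{r}(n_i-1)=n-1$. Among the paths in $\mathcal P(n-1,r,r+1)$ that start with a down step and have, for each $i=0,\dots,r$, exactly $n_i-1$ down steps in positions congruent to $i \pmod{r+1}$, the number having exactly $j$ down steps in positions congruent to $0\pmod{r+1}$ that start on or below the $x$-axis is independent of $j$ for $j=1,\dots,n_0-1$, and equals $\frac{1}{n_0-1}\binom{n-1}{n_0-2}\binom{n}{n_1-1}\cdots\binom{n}{n_r-1}$. (2) Let $n_0,\dots,n_r$ be nonnegative integers with $n_0\ge1$ and $n_0+\cdots+n_r=rn+1$. Among the paths in $\mathcal P(n-1,r,r+1)$ that start with an up step and have, for each $i=0,\dots,r$, exactly $n_i$ up steps in positions congruent to $i\pmod{r+1}$, the number having exactly $j$ up steps in positions congruent to $0\pmod{r+1}$ that start on or below the $x$-axis is independent of $j$ for $j=1,\dots,n_0$, and equals $\frac{1}{n_0}\binom{n-1}{n_0-1}\binom{n}{n_1}\cdots\binom{n}{n_r}$.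
   Context: A step starts on or below the $x$-axis if its initial vertex has $y$-coordinate $\le0$. *)

theory Defs
  imports Complex_Main
begin

text \<open>A lattice path is a list of steps: True = up step (1,1), False = down step (1,-r).
  The step in position m (0-based) starts at the vertex reached after m steps,
  whose y-coordinate is height r p m.\<close>

definition height :: "nat \<Rightarrow> bool list \<Rightarrow> nat \<Rightarrow> int" where
  "height r p m = (\<Sum>k<m. if p ! k then 1 else - int r)"

definition lpaths :: "nat \<Rightarrow> nat \<Rightarrow> bool list set" where
  "lpaths r n = {p. length p = (r + 1) * n \<and> height r p (length p) = int r + 1}"

end

theory Submission
  imports Defs "HOL-Library.FuncSet" "HOL-Library.Product_Lexorder"
begin


definition hx :: "nat \<Rightarrow> bool list \<Rightarrow> nat \<Rightarrow> int" where
 "hx r p m = (\<Sum>k<m. if p ! (k mod length p) then 1 else - int r)"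

lemma hx_height: "m \<le> length p \<Longrightarrow> hx r p m = height r p m"
  unfolding hx_def height_def by (intro sum.cong) auto

lemma hx_Suc: "hx r p (Suc m) = hx r p m + (if p ! (m mod length p) then 1 else - int r)"
  unfolding hx_def by simp

lemma hx_add_len: "hx r p (m + length p) = hx r p m + hx r p (length p)"
proof (induction m)
  case 0 then show ?case by (simp add: hx_def)
next
  case (Suc m)
  have "hx r p (Suc m + length p) = hx r p (m + length p) + (if p ! ((m + length p) mod length p) then 1 else - int r)"
    using hx_Suc[of r p "m + length p"] by simp
  then show ?case using Suc by (simp add: hx_Suc)
qed

lemma hx_mult_len: "hx r p (k * length p + m) = hx r p m + int k * hx r p (length p)"
proof (induction k)
  case 0 then show ?case by simp
next
  case (Suc k)
  have "hx r p (Suc k * length p + m) = hx r p ((k * length p + m) + length p)" by (simp add: algebra_simps)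
  also have "\<dots> = hx r p (k * length p + m) + hx r p (length p)" by (rule hx_add_len)
  also have "\<dots> = hx r p m + int (Suc k) * hx r p (length p)" using Suc by (simp add: algebra_simps)
  finally show ?case .
qed

lemma hx_cong: "\<exists>c. hx r p m = int m + (int r + 1) * c"
proof (induction m)
  case 0 then show ?case by (simp add: hx_def)
next
  case (Suc m)
  then obtain c where c: "hx r p m = int m + (int r + 1) * c" by blast
  show ?case
  proof (cases "p ! (m mod length p)")
    case True then show ?thesis using c by (intro exI[of _ c]) (simp add: hx_Suc)
  next
    case False then show ?thesis using c by (intro exI[of _ "c - 1"]) (simp add: hx_Suc algebra_simps)
  qed
qed

lemma hx_block_dvd: "(int r + 1) dvd hx r p (u * (r + 1))"
proof -
  obtain c where "hx r p (u * (r+1)) = int (u*(r+1)) + (int r + 1) * c" using hx_cong by blast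
  then have "hx r p (u * (r+1)) = (int r + 1) * (int u + c)" by (simp add: algebra_simps)
  then show ?thesis by simp
qed

lemma height_rotate:
  assumes "t \<le> length p"
  shows "height r (rotate s p) t = hx r p (s + t) - hx r p s"
  using assms
proof (induction t)
  case 0 then show ?case by (simp add: height_def)
next
  case (Suc t)
  have "height r (rotate s p) (Suc t) = height r (rotate s p) t + (if rotate s p ! t then 1 else - int r)"
    by (simp add: height_def)
  also have "rotate s p ! t = p ! ((s + t) mod length p)" using Suc.prems by (simp add: nth_rotate)
  finally show ?case using Suc by (simp add: hx_Suc)
qed


lemma mod_block: "i < (B::nat) \<Longrightarrow> (x * B + i) mod (B * n) = (x mod n) * B + i"
proof (cases "n = 0")
  case False
  assume i: "i < B"
  have e: "x * B + i = (x mod n) * B + i + (x div n) * (B * n)"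
  proof -
    define q m where "q = x div n" and "m = x mod n"
    have "x = q * n + m" unfolding q_def m_def by simp
    then show ?thesis unfolding q_def[symmetric] m_def[symmetric] by (simp add: algebra_simps)
  qed
  have "(x mod n) * B + i < B * n"
  proof -
    have "x mod n + 1 \<le> n" using False by (simp add: Suc_le_eq)
    then have "(x mod n + 1) * B \<le> n * B" by (rule mult_right_mono) simp
    then show ?thesis using i by (simp add: algebra_simps)
  qed
  moreover have "(x * B + i) mod (B * n) = ((x mod n) * B + i + (x div n) * (B * n)) mod (B * n)"
    using arg_cong[where f="\<lambda>t. t mod (B * n)", OF e] .
  moreover have "((x mod n) * B + i + (x div n) * (B * n)) mod (B * n) = ((x mod n) * B + i) mod (B * n)"
    by (rule mod_mult_self1)
  ultimately show ?thesis by simp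
qed simp

lemma rot_mod: "(a::nat) < n \<Longrightarrow> k < n \<Longrightarrow> (a + k) mod n = (if a + k < n then a + k else a + k - n)"
proof (cases "a + k < n")
  case False
  assume "a < n" "k < n"
  then have "a + k - n < n" by arith
  then show ?thesis using False le_mod_geq[of n "a+k"] by simp
qed simp

lemma card_rot:
  assumes "(a::nat) < n"
  shows "card {k. k < n \<and> P ((a + k) mod n)} = card {u. u < n \<and> P u}"
proof -
  let ?g = "\<lambda>k. (a + k) mod n"
  have inj: "inj_on ?g {k. k < n \<and> P ((a + k) mod n)}"
  proof (rule inj_onI)
    fix x y assume "x \<in> {k. k < n \<and> P ((a + k) mod n)}" "y \<in> {k. k < n \<and> P ((a + k) mod n)}" "?g x = ?g y"
    then show "x = y" using rot_mod[OF assms, of x] rot_mod[OF assms, of y] by (auto split: if_splits)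
  qed
  have "?g ` {k. k < n \<and> P ((a + k) mod n)} = {u. u < n \<and> P u}"
  proof
    show "?g ` {k. k < n \<and> P ((a + k) mod n)} \<subseteq> {u. u < n \<and> P u}" using assms by auto
  next
    show "{u. u < n \<and> P u} \<subseteq> ?g ` {k. k < n \<and> P ((a + k) mod n)}"
    proof
      fix u assume u: "u \<in> {u. u < n \<and> P u}"
      define k where "k = (if a \<le> u then u - a else u + n - a)"
      have "k < n" "?g k = u" using u assms by (auto simp: k_def rot_mod)
      then show "u \<in> ?g ` {k. k < n \<and> P ((a + k) mod n)}" using u by (intro image_eqI[of _ _ k]) auto
    qed
  qed
  then show ?thesis using card_image[OF inj] by simp
qed

lemma card_block:
  assumes "i < (B::nat)"
  shows "card {m. m < B * n \<and> P m \<and> m mod B = i} = card {k. k < n \<and> P (k * B + i)}"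
proof -
  let ?g = "\<lambda>k. k * B + i"
  have inj: "inj_on ?g {k. k < n \<and> P (k * B + i)}"
    using assms by (intro inj_onI) simp
  have "?g ` {k. k < n \<and> P (k * B + i)} = {m. m < B * n \<and> P m \<and> m mod B = i}"
  proof
    show "?g ` {k. k < n \<and> P (k * B + i)} \<subseteq> {m. m < B * n \<and> P m \<and> m mod B = i}"
    proof
      fix m assume "m \<in> ?g ` {k. k < n \<and> P (k * B + i)}"
      then obtain k where k: "k < n" "P (k * B + i)" "m = k * B + i" by auto
      have "k * B + i < (k + 1) * B" using assms by simp
      also have "\<dots> \<le> n * B" using k by (intro mult_right_mono) auto
      finally show "m \<in> {m. m < B * n \<and> P m \<and> m mod B = i}" using k assms by (simp add: mult.commute)
    qed
  next
    show "{m. m < B * n \<and> P m \<and> m mod B = i} \<subseteq> ?g ` {k. k < n \<and> P (k * B + i)}"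
    proof
      fix m assume m: "m \<in> {m. m < B * n \<and> P m \<and> m mod B = i}"
      have e: "m = (m div B) * B + i" using m div_mult_mod_eq[of m B] by simp
      have "m div B < n" using m by (simp add: less_mult_imp_div_less mult.commute)
      then show "m \<in> ?g ` {k. k < n \<and> P (k * B + i)}" using m e by (intro image_eqI[of _ _ "m div B"]) auto
    qed
  qed
  then show ?thesis using card_image[OF inj] by simp
qed



lemma nth_rot_block:
  assumes "length p = (r+1)*n" "i < r+1" "k < n"
  shows "rotate (a*(r+1)) p ! (k*(r+1)+i) = p ! (((a+k) mod n)*(r+1)+i)"
proof -
  have "k*(r+1)+i < (k+1)*(r+1)" using assms by simp
  also have "\<dots> \<le> n*(r+1)" using assms by (intro mult_right_mono) auto
  finally have lt: "k*(r+1)+i < length p" using assms by (simp add: mult.commute)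
  have "rotate (a*(r+1)) p ! (k*(r+1)+i) = p ! ((a*(r+1) + (k*(r+1)+i)) mod length p)"
    using lt by (simp add: nth_rotate)
  also have "a*(r+1) + (k*(r+1)+i) = (a+k)*(r+1)+i" by (simp add: algebra_simps)
  also have "((a+k)*(r+1)+i) mod length p = ((a+k) mod n)*(r+1)+i"
    using assms mod_block[of i "r+1" "a+k" n] by simp
  finally show ?thesis .
qed

lemma height_rot_block:
  assumes "p \<in> lpaths r n" "a < n" "k < n"
  shows "height r (rotate (a*(r+1)) p) (k*(r+1)) =
    (if a + k < n then height r p ((a+k)*(r+1)) - height r p (a*(r+1))
     else height r p ((a+k-n)*(r+1)) + (int r + 1) - height r p (a*(r+1)))"
proof -
  have len: "length p = (r+1)*n" and hL: "height r p (length p) = int r + 1"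
    using assms(1) by (auto simp: lpaths_def)
  have le: "u*(r+1) \<le> length p" if "u \<le> n" for u
  proof -
    have "u*(r+1) \<le> n*(r+1)" using that by (rule mult_right_mono) simp
    then show ?thesis using len by (simp add: mult.commute)
  qed
  have "height r (rotate (a*(r+1)) p) (k*(r+1)) = hx r p (a*(r+1) + k*(r+1)) - hx r p (a*(r+1))"
    using assms le[of k] by (intro height_rotate) auto
  also have "a*(r+1) + k*(r+1) = (a+k)*(r+1)" by (simp add: algebra_simps)
  also have "hx r p (a*(r+1)) = height r p (a*(r+1))" using assms le[of a] by (intro hx_height) auto
  finally have e: "height r (rotate (a*(r+1)) p) (k*(r+1)) = hx r p ((a+k)*(r+1)) - height r p (a*(r+1))" .
  show ?thesis
  proof (cases "a + k < n")
    case True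
    then show ?thesis using e le[of "a+k"] hx_height[of "(a+k)*(r+1)" p r] by simp
  next
    case False
    have "a+k = (a+k-n)+n" using False by simp
    then have "(a+k)*(r+1) = (a+k-n)*(r+1) + n*(r+1)" by (metis add_mult_distrib)
    then have "(a+k)*(r+1) = (a+k-n)*(r+1) + length p" using len by (simp add: mult.commute)
    then have "hx r p ((a+k)*(r+1)) = hx r p ((a+k-n)*(r+1)) + hx r p (length p)"
      using hx_add_len by simp
    also have "hx r p (length p) = int r + 1" using hL hx_height[of "length p" p r] by simp
    also have "hx r p ((a+k-n)*(r+1)) = height r p ((a+k-n)*(r+1))"
      using False assms le[of "a+k-n"] by (intro hx_height) auto
    finally show ?thesis using e False by simp
  qed
qed



definition stat :: "bool \<Rightarrow> nat \<Rightarrow> bool list \<Rightarrow> nat" where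
 "stat v r p = card {m. m < length p \<and> p!m = v \<and> m mod (r+1) = 0 \<and> height r p m \<le> 0}"
definition Mk :: "bool \<Rightarrow> nat \<Rightarrow> nat \<Rightarrow> bool list \<Rightarrow> nat set" where
 "Mk v r n p = {a. a < n \<and> p ! (a*(r+1)) = v}"
definition key :: "nat \<Rightarrow> bool list \<Rightarrow> nat \<Rightarrow> int \<times> int" where
 "key r p u = (height r p (u*(r+1)), - int u)"

lemma dvd_lt:
  assumes "(B::int) > 0" "B dvd x" "B dvd y"
  shows "x + B \<le> y \<longleftrightarrow> x < y"
proof -
  obtain s t where st: "x = B * s" "y = B * t" using assms by (auto elim!: dvdE)
  have "x + B \<le> y \<longleftrightarrow> B * (s + 1) \<le> B * t" using st by (simp add: algebra_simps)
  also have "\<dots> \<longleftrightarrow> s + 1 \<le> t" using assms by simp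
  also have "\<dots> \<longleftrightarrow> s < t" by arith
  also have "\<dots> \<longleftrightarrow> B * s < B * t" using assms by simp
  finally show ?thesis using st by simp
qed

lemma height_block_dvd:
  assumes "p \<in> lpaths r n" "u \<le> n"
  shows "(int r + 1) dvd height r p (u*(r+1))"
proof -
  have "u*(r+1) \<le> n*(r+1)" using assms by (intro mult_right_mono) auto
  then have "u*(r+1) \<le> length p" using assms by (simp add: lpaths_def mult.commute)
  then have "height r p (u*(r+1)) = hx r p (u*(r+1))" by (simp add: hx_height)
  then show ?thesis using hx_block_dvd by simp
qed

lemma stat_rot:
  assumes p: "p \<in> lpaths r n" and a: "a \<in> Mk v r n p"
  shows "stat v r (rotate (a*(r+1)) p) = card {u \<in> Mk v r n p. key r p u \<le> key r p a}"
proof -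
  let ?q = "rotate (a*(r+1)) p"
  have len: "length ?q = (r+1)*n" using p by (simp add: lpaths_def)
  have an: "a < n" and pa: "p ! (a*(r+1)) = v" using a by (auto simp: Mk_def)
  define Q where "Q u \<longleftrightarrow> p ! (u*(r+1)) = v \<and> key r p u \<le> key r p a" for u
  have eq: "(?q ! (k*(r+1)+0) = v \<and> height r ?q (k*(r+1)+0) \<le> 0) \<longleftrightarrow> Q ((a+k) mod n)" if k: "k < n" for k
  proof -
    have n1: "?q ! (k*(r+1)+0) = p ! (((a+k) mod n)*(r+1)+0)"
      using p k by (intro nth_rot_block) (auto simp: lpaths_def)
    have h: "height r ?q (k*(r+1)) =
      (if a + k < n then height r p ((a+k)*(r+1)) - height r p (a*(r+1))
       else height r p ((a+k-n)*(r+1)) + (int r + 1) - height r p (a*(r+1)))"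
      using height_rot_block[OF p an k] .
    have da: "(int r + 1) dvd height r p (a*(r+1))" using height_block_dvd[OF p] an by simp
    show ?thesis
    proof (cases "a + k < n")
      case True
      then have u: "(a+k) mod n = a + k" by simp
      show ?thesis using n1 h True unfolding u Q_def key_def by auto
    next
      case False
      then have u: "(a+k) mod n = a + k - n" using rot_mod[OF an k] by simp
      have "a+k-n \<le> n" using k an by arith
      then have du: "(int r + 1) dvd height r p ((a+k-n)*(r+1))" by (rule height_block_dvd[OF p])
      have "height r p ((a+k-n)*(r+1)) + (int r + 1) \<le> height r p (a*(r+1)) \<longleftrightarrow>
            height r p ((a+k-n)*(r+1)) < height r p (a*(r+1))"
        by (rule dvd_lt[OF _ du da]) simp
      moreover have "a + k - n < a" using False k by simp
      ultimately show ?thesis using n1 h False unfolding u Q_def key_def by auto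
    qed
  qed
  have "stat v r ?q = card {m. m < (r+1)*n \<and> (?q!m = v \<and> height r ?q m \<le> 0) \<and> m mod (r+1) = 0}"
    unfolding stat_def len by (intro arg_cong[where f=card]) auto
  also have "\<dots> = card {k. k < n \<and> (?q ! (k*(r+1)+0) = v \<and> height r ?q (k*(r+1)+0) \<le> 0)}"
    by (rule card_block) simp
  also have "\<dots> = card {k. k < n \<and> Q ((a+k) mod n)}"
    using eq by (intro arg_cong[where f=card]) auto
  also have "\<dots> = card {u. u < n \<and> Q u}" by (rule card_rot[OF an])
  also have "\<dots> = card {u \<in> Mk v r n p. key r p u \<le> key r p a}"
    unfolding Q_def Mk_def by (intro arg_cong[where f=card]) auto
  finally show ?thesis .
qed



lemma rank_unique:
  fixes key :: "'a \<Rightarrow> 'b::linorder"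
  assumes fin: "finite M" and inj: "inj_on key M" and j: "j \<in> {1..card M}"
  shows "card {a \<in> M. card {u\<in>M. key u \<le> key a} = j} = 1"
proof -
  define rk where "rk a = card {u\<in>M. key u \<le> key a}" for a
  have sub: "rk ` M \<subseteq> {1..card M}"
  proof
    fix x assume "x \<in> rk ` M"
    then obtain a where a: "a \<in> M" "x = rk a" by auto
    have "a \<in> {u\<in>M. key u \<le> key a}" using a by simp
    then have "rk a \<ge> 1" unfolding rk_def using fin
      by (metis (no_types, lifting) One_nat_def Suc_leI card_gt_0_iff empty_iff finite_subset mem_Collect_eq subsetI)
    moreover have "rk a \<le> card M" unfolding rk_def using fin by (intro card_mono) auto
    ultimately show "x \<in> {1..card M}" using a by simp
  qed
  have lt: "rk a < rk b" if "a \<in> M" "b \<in> M" "key a < key b" for a b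
  proof -
    have s: "{u\<in>M. key u \<le> key a} \<subseteq> {u\<in>M. key u \<le> key b}" using that by auto
    have "b \<in> {u\<in>M. key u \<le> key b}" "b \<notin> {u\<in>M. key u \<le> key a}" using that by auto
    then have "{u\<in>M. key u \<le> key a} \<subset> {u\<in>M. key u \<le> key b}" using s by blast
    then show ?thesis unfolding rk_def using fin by (intro psubset_card_mono) auto
  qed
  have injr: "inj_on rk M"
  proof (rule inj_onI)
    fix a b assume ab: "a \<in> M" "b \<in> M" "rk a = rk b"
    show "a = b"
    proof (rule ccontr)
      assume "a \<noteq> b"
      then have "key a \<noteq> key b" using inj ab by (auto dest: inj_onD)
      then have "key a < key b \<or> key b < key a" by auto
      then show False using lt ab by fastforce
    qed
  qed
  have "card (rk ` M) = card {1..card M}" using card_image[OF injr] by simp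
  then have img: "rk ` M = {1..card M}" using sub by (intro card_subset_eq) auto
  then obtain a0 where a0: "a0 \<in> M" "rk a0 = j" using j by (metis imageE)
  have "{a \<in> M. rk a = j} = {a0}" using a0 injr by (auto dest: inj_onD)
  then show ?thesis unfolding rk_def by simp
qed



definition Aset :: "bool \<Rightarrow> nat \<Rightarrow> nat \<Rightarrow> (nat \<Rightarrow> nat) \<Rightarrow> bool list set" where
 "Aset v r n c = {p \<in> lpaths r n. p!0 = v \<and>
    (\<forall>i\<le>r. card {m. m < length p \<and> p!m = v \<and> m mod (r+1) = i} = c i)}"

lemma class_count_block:
  assumes "length p = (r+1)*n" "i \<le> r"
  shows "card {m. m < length p \<and> p!m = v \<and> m mod (r+1) = i} = card {k. k < n \<and> p ! (k*(r+1)+i) = v}"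
proof -
  have "card {m. m < length p \<and> p!m = v \<and> m mod (r+1) = i} = card {m. m < (r+1)*n \<and> p!m = v \<and> m mod (r+1) = i}"
    using assms by simp
  also have "\<dots> = card {k. k < n \<and> p ! (k*(r+1)+i) = v}" using assms by (intro card_block) simp
  finally show ?thesis .
qed

lemma card_Mk:
  assumes "p \<in> Aset v r n c"
  shows "card (Mk v r n p) = c 0"
proof -
  have len: "length p = (r+1)*n" using assms by (simp add: Aset_def lpaths_def)
  have "c 0 = card {m. m < length p \<and> p!m = v \<and> m mod (r+1) = 0}" using assms by (simp add: Aset_def)
  also have "\<dots> = card {k. k < n \<and> p ! (k*(r+1)+0) = v}" by (rule class_count_block[OF len]) simp
  finally show ?thesis by (simp add: Mk_def)
qed

lemma finite_Aset: "finite (Aset v r n c)"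
proof -
  have "Aset v r n c \<subseteq> {xs. set xs \<subseteq> UNIV \<and> length xs = (r+1)*n}" by (auto simp: Aset_def lpaths_def)
  moreover have "finite {xs. set xs \<subseteq> (UNIV::bool set) \<and> length xs = (r+1)*n}"
    by (rule finite_lists_length_eq) simp
  ultimately show ?thesis by (rule finite_subset)
qed

lemma finite_Mk: "finite (Mk v r n p)" by (simp add: Mk_def)

lemma rot_in_A:
  assumes p: "p \<in> Aset v r n c" and a: "a \<in> Mk v r n p"
  shows "rotate (a*(r+1)) p \<in> Aset v r n c"
proof -
  let ?q = "rotate (a*(r+1)) p"
  have pl: "p \<in> lpaths r n" using p by (simp add: Aset_def)
  have len: "length p = (r+1)*n" using pl by (simp add: lpaths_def)
  have an: "a < n" and pa: "p ! (a*(r+1)) = v" using a by (auto simp: Mk_def)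
  have lenq: "length ?q = (r+1)*n" using len by simp
  have "height r ?q (length ?q) = hx r p (a*(r+1) + length p) - hx r p (a*(r+1))"
    by (simp add: height_rotate)
  also have "\<dots> = hx r p (length p)" by (simp add: hx_add_len)
  also have "\<dots> = int r + 1"
  proof -
    have hL: "height r p (length p) = int r + 1" using pl unfolding lpaths_def by blast
    then show ?thesis by (simp add: hx_height)
  qed
  finally have hq: "height r ?q (length ?q) = int r + 1" .
  have q0: "?q ! 0 = v"
    using nth_rot_block[OF len, of 0 0 a] an pa by simp
  have cnt: "card {m. m < length ?q \<and> ?q!m = v \<and> m mod (r+1) = i} = c i" if i: "i \<le> r" for i
  proof -
    have "card {m. m < length ?q \<and> ?q!m = v \<and> m mod (r+1) = i} = card {k. k < n \<and> ?q ! (k*(r+1)+i) = v}"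
      by (rule class_count_block[OF lenq i])
    also have "\<dots> = card {k. k < n \<and> p ! (((a+k) mod n)*(r+1)+i) = v}"
      using nth_rot_block[OF len, of i _ a] i by (intro arg_cong[where f=card]) auto
    also have "\<dots> = card {u. u < n \<and> p ! (u*(r+1)+i) = v}" by (rule card_rot[OF an])
    also have "\<dots> = card {m. m < length p \<and> p!m = v \<and> m mod (r+1) = i}"
      by (rule class_count_block[OF len i, symmetric])
    also have "\<dots> = c i" using p i by (simp add: Aset_def)
    finally show ?thesis .
  qed
  show ?thesis using lenq hq q0 cnt by (simp add: Aset_def lpaths_def)
qed

lemma rot_back:
  assumes p: "p \<in> Aset v r n c" and a: "a \<in> Mk v r n p"
  shows "(n - a) mod n \<in> Mk v r n (rotate (a*(r+1)) p)"
    and "rotate (((n - a) mod n)*(r+1)) (rotate (a*(r+1)) p) = p"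
proof -
  have len: "length p = (r+1)*n" using p by (simp add: Aset_def lpaths_def)
  have an: "a < n" using a by (auto simp: Mk_def)
  have p0: "p ! 0 = v" using p by (simp add: Aset_def)
  have s: "(a + (n - a) mod n) mod n = 0"
  proof (cases "a = 0")
    case False then show ?thesis using an by simp
  qed simp
  have bn: "(n - a) mod n < n" using an by simp
  show "(n - a) mod n \<in> Mk v r n (rotate (a*(r+1)) p)"
    using nth_rot_block[OF len, of 0 "(n - a) mod n" a] bn s p0 by (simp add: Mk_def)
  have e1: "((n - a) mod n)*(r+1) + a*(r+1) = ((n - a) mod n + a)*(r+1)" by (simp add: algebra_simps)
  have "((n - a) mod n + a) mod n = 0" using s by (simp add: add.commute)
  then obtain t where t: "(n - a) mod n + a = n * t" by (auto elim!: dvdE simp: mod_eq_0_iff_dvd)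
  have "((n - a) mod n)*(r+1) + a*(r+1) = (n*t)*(r+1)" using e1 t by simp
  also have "\<dots> = length p * t" using len by (simp add: algebra_simps)
  finally have "(((n - a) mod n)*(r+1) + a*(r+1)) mod length p = 0" by simp
  then show "rotate (((n - a) mod n)*(r+1)) (rotate (a*(r+1)) p) = p"
    by (simp add: rotate_rotate)
qed



lemma uniform:
  assumes j: "j \<in> {1..c 0}"
  shows "card {p \<in> Aset v r n c. stat v r p = j} * c 0 = card (Aset v r n c)"
proof -
  define A where "A = Aset v r n c"
  define P where "P = Sigma A (Mk v r n)"
  define \<Phi> :: "bool list \<times> nat \<Rightarrow> bool list \<times> nat" where "\<Phi> x = (rotate (snd x * (r+1)) (fst x), (n - snd x) mod n)" for x
  have \<Phi>P: "\<Phi> x \<in> P" if "x \<in> P" for x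
    using that rot_in_A rot_back(1) unfolding P_def A_def \<Phi>_def by (auto simp: split_beta)
  have \<Phi>\<Phi>: "\<Phi> (\<Phi> x) = x" if xP: "x \<in> P" for x
  proof -
    obtain p a where x: "x = (p, a)" "p \<in> A" "a \<in> Mk v r n p" using xP unfolding P_def by (cases x) auto
    have an: "a < n" using x by (simp add: Mk_def)
    have "(n - (n - a) mod n) mod n = a"
    proof (cases "a = 0")
      case False then show ?thesis using an by simp
    qed simp
    then show ?thesis using rot_back(2)[of p v r n c a] x unfolding \<Phi>_def A_def by simp
  qed
  define S1 where "S1 = {x\<in>P. stat v r (fst (\<Phi> x)) = j}"
  define S2 where "S2 = {x\<in>P. stat v r (fst x) = j}"
  have img: "\<Phi> ` S1 = S2"
  proof
    show "\<Phi> ` S1 \<subseteq> S2" unfolding S1_def S2_def using \<Phi>P by auto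
    show "S2 \<subseteq> \<Phi> ` S1"
    proof
      fix y assume y: "y \<in> S2"
      then have "\<Phi> y \<in> S1" "\<Phi> (\<Phi> y) = y" unfolding S1_def S2_def using \<Phi>P \<Phi>\<Phi> by auto
      then show "y \<in> \<Phi> ` S1" by (metis imageI)
    qed
  qed
  have inj: "inj_on \<Phi> S1"
  proof (rule inj_onI)
    fix x y assume xy: "x \<in> S1" "y \<in> S1" "\<Phi> x = \<Phi> y"
    then have "x \<in> P" "y \<in> P" by (simp_all add: S1_def)
    then have "x = \<Phi> (\<Phi> x)" "y = \<Phi> (\<Phi> y)" using \<Phi>\<Phi> by simp_all
    then show "x = y" using xy(3) by simp
  qed
  have c12: "card S1 = card S2" using card_image[OF inj] img by simp
  have finA: "finite A" unfolding A_def by (rule finite_Aset)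
  have "S1 = Sigma A (\<lambda>p. {a \<in> Mk v r n p. stat v r (rotate (a*(r+1)) p) = j})"
    unfolding S1_def P_def \<Phi>_def by auto
  then have "card S1 = (\<Sum>p\<in>A. card {a \<in> Mk v r n p. stat v r (rotate (a*(r+1)) p) = j})"
    using finA by (simp add: finite_Mk)
  also have "\<dots> = (\<Sum>p\<in>A. 1)"
  proof (rule sum.cong)
    fix p assume p: "p \<in> A"
    have pl: "p \<in> lpaths r n" using p by (simp add: A_def Aset_def)
    have "{a \<in> Mk v r n p. stat v r (rotate (a*(r+1)) p) = j} =
          {a \<in> Mk v r n p. card {u \<in> Mk v r n p. key r p u \<le> key r p a} = j}"
      using stat_rot[OF pl] by auto
    also have "card \<dots> = 1"
    proof (rule rank_unique)
      show "finite (Mk v r n p)" by (rule finite_Mk)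
      show "inj_on (key r p) (Mk v r n p)" by (rule inj_onI) (simp add: key_def)
      show "j \<in> {1..card (Mk v r n p)}" using j card_Mk p by (simp add: A_def)
    qed
    finally show "card {a \<in> Mk v r n p. stat v r (rotate (a*(r+1)) p) = j} = 1" .
  qed simp
  finally have cs1: "card S1 = card A" by simp
  have "S2 = Sigma {p\<in>A. stat v r p = j} (Mk v r n)"
    unfolding S2_def P_def by auto
  then have "card S2 = (\<Sum>p\<in>{p\<in>A. stat v r p = j}. card (Mk v r n p))"
    using finA by (simp add: finite_Mk)
  also have "\<dots> = (\<Sum>p\<in>{p\<in>A. stat v r p = j}. c 0)"
    by (rule sum.cong) (auto simp: card_Mk A_def)
  finally have "card S2 = card {p\<in>A. stat v r p = j} * c 0" by simp
  then show ?thesis using c12 cs1 by (simp add: A_def)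
qed



lemma height_count:
  "height r p m = int (card {k. k<m \<and> p!k}) - int r * int (card {k. k<m \<and> \<not> p!k})"
proof -
  have "height r p m = (\<Sum>k\<in>{..<m} \<inter> {x. p!x}. 1) + (\<Sum>k\<in>{..<m} \<inter> - {x. p!x}. - int r)"
    unfolding height_def by (rule sum.If_cases) simp
  also have "{..<m} \<inter> {x. p!x} = {k. k<m \<and> p!k}" by auto
  also have "{..<m} \<inter> - {x. p!x} = {k. k<m \<and> \<not> p!k}" by auto
  finally show ?thesis by simp
qed

lemma count_split: "card {k. k<m \<and> p!k} + card {k. k<m \<and> \<not> p!k} = m"
proof -
  have "card ({k. k<m \<and> p!k} \<union> {k. k<m \<and> \<not> p!k}) = card {k. k<m \<and> p!k} + card {k. k<m \<and> \<not> p!k}"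
    by (rule card_Un_disjoint) auto
  also have "{k. k<m \<and> p!k} \<union> {k. k<m \<and> \<not> p!k} = {..<m}" by auto
  finally show ?thesis by simp
qed

lemma total_count:
  "card {m. m < length p \<and> p!m = v} = (\<Sum>i\<le>r. card {m. m < length p \<and> p!m = v \<and> m mod (r+1) = i})"
proof -
  have "{m. m < length p \<and> p!m = v} = (\<Union>i\<in>{..r}. {m. m < length p \<and> p!m = v \<and> m mod (r+1) = i})"
  proof -
    have "m mod (r+1) \<le> r" for m
      by (metis Suc_eq_plus1 less_Suc_eq_le mod_less_divisor zero_less_Suc)
    then show ?thesis by auto
  qed
  also have "card \<dots> = (\<Sum>i\<le>r. card {m. m < length p \<and> p!m = v \<and> m mod (r+1) = i})"
    by (rule card_UN_disjoint) auto
  finally show ?thesis .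
qed

lemma Aset_eq:
  assumes n: "n \<ge> 1" and tot: "(\<Sum>i\<le>r. c i) = (if v then r*n+1 else n-1)"
  shows "Aset v r n c = {p. length p = (r+1)*n \<and> p!0 = v \<and>
    (\<forall>i\<le>r. card {m. m < length p \<and> p!m = v \<and> m mod (r+1) = i} = c i)}"
proof -
  have "height r p (length p) = int r + 1" if len: "length p = (r+1)*n"
    and cnt: "\<forall>i\<le>r. card {m. m < length p \<and> p!m = v \<and> m mod (r+1) = i} = c i" for p
  proof -
    have T: "card {m. m < length p \<and> p!m = v} = (if v then r*n+1 else n-1)"
      using total_count[of p v r] cnt tot by simp
    have S: "card {k. k<length p \<and> p!k} + card {k. k<length p \<and> \<not> p!k} = (r+1)*n"
      using count_split[of "length p" p] len by simp
    have "card {k. k<length p \<and> p!k} = r*n+1 \<and> card {k. k<length p \<and> \<not> p!k} = n - 1"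
    proof (cases v)
      case True then show ?thesis using T S n by (simp add: algebra_simps)
    next
      case False then show ?thesis using T S n by (simp add: algebra_simps)
    qed
    then show ?thesis using n by (simp add: height_count of_nat_diff algebra_simps)
  qed
  then show ?thesis unfolding Aset_def lpaths_def by auto
qed



lemma card_T0:
  assumes "c0 \<ge> 1" and n1: "n \<ge> 1"
  shows "card {S. S \<subseteq> {..<n} \<and> 0 \<in> S \<and> card S = c0} = (n - 1) choose (c0 - 1)"
proof -
  have img: "insert 0 ` {S. S \<subseteq> {1..<n} \<and> card S = c0 - 1} = {S. S \<subseteq> {..<n} \<and> 0 \<in> S \<and> card S = c0}"
  proof
    show "insert 0 ` {S. S \<subseteq> {1..<n} \<and> card S = c0 - 1} \<subseteq> {S. S \<subseteq> {..<n} \<and> 0 \<in> S \<and> card S = c0}"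
    proof
      fix X assume "X \<in> insert 0 ` {S. S \<subseteq> {1..<n} \<and> card S = c0 - 1}"
      then obtain S where S: "S \<subseteq> {1..<n}" "card S = c0 - 1" "X = insert 0 S" by auto
      have "finite S" by (rule finite_subset[OF S(1)]) simp
      have "0 \<notin> S" using S(1) by auto
      have "card X = c0" using \<open>finite S\<close> \<open>0 \<notin> S\<close> S assms by simp
      moreover have "X \<subseteq> {..<n}" using S n1 by auto
      ultimately show "X \<in> {S. S \<subseteq> {..<n} \<and> 0 \<in> S \<and> card S = c0}" using S by auto
    qed
  next
    show "{S. S \<subseteq> {..<n} \<and> 0 \<in> S \<and> card S = c0} \<subseteq> insert 0 ` {S. S \<subseteq> {1..<n} \<and> card S = c0 - 1}"
    proof
      fix X assume X: "X \<in> {S. S \<subseteq> {..<n} \<and> 0 \<in> S \<and> card S = c0}"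
      have "finite X" using X by (intro finite_subset[of X "{..<n}"]) auto
      then have "card (X - {0}) = c0 - 1" using X by simp
      moreover have "X - {0} \<subseteq> {1..<n}" using X by auto
      moreover have "X = insert 0 (X - {0})" using X by auto
      ultimately show "X \<in> insert 0 ` {S. S \<subseteq> {1..<n} \<and> card S = c0 - 1}" by blast
    qed
  qed
  have inj: "inj_on (insert 0) {S. S \<subseteq> {1..<n} \<and> card S = c0 - 1}"
  proof (rule inj_onI)
    fix S1 S2 assume h: "S1 \<in> {S. S \<subseteq> {1..<n} \<and> card S = c0 - 1}" "S2 \<in> {S. S \<subseteq> {1..<n} \<and> card S = c0 - 1}"
      "insert 0 S1 = insert (0::nat) S2"
    have "0 \<notin> S1" "0 \<notin> S2" using h(1,2) by auto
    then have "S1 = insert 0 S1 - {0}" "S2 = insert 0 S2 - {0}" by simp_all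
    then show "S1 = S2" using h(3) by simp
  qed
  have "card {S. S \<subseteq> {..<n} \<and> 0 \<in> S \<and> card S = c0} = card {S. S \<subseteq> {1..<n} \<and> card S = c0 - 1}"
    using card_image[OF inj] img by simp
  also have "\<dots> = card {1..<n} choose (c0 - 1)" by (rule n_subsets) simp
  finally show ?thesis by simp
qed


lemma dm_gen: "i < (B::nat) \<Longrightarrow> (k*B+i) div B = k \<and> (k*B+i) mod B = i"
  by simp


lemma card_A2:
  fixes v :: bool and c :: "nat \<Rightarrow> nat"
  assumes n: "n \<ge> 1" and c0: "c 0 \<ge> 1"
  shows "card {p. length p = (r+1)*n \<and> p!0 = v \<and>
    (\<forall>i\<le>r. card {m. m < length p \<and> p!m = v \<and> m mod (r+1) = i} = c i)}
    = ((n - 1) choose (c 0 - 1)) * (\<Prod>i\<in>{1..r}. n choose c i)"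
proof -
  define A2 where "A2 = {p. length p = (r+1)*n \<and> p!0 = v \<and>
    (\<forall>i\<le>r. card {m. m < length p \<and> p!m = v \<and> m mod (r+1) = i} = c i)}"
  define T where "T i = (if i = 0 then {S. S \<subseteq> {..<n} \<and> 0 \<in> S \<and> card S = c 0}
     else {S. S \<subseteq> {..<n} \<and> card S = c i})" for i
  define F where "F p = (\<lambda>i\<in>{..r}. {k. k<n \<and> p!(k*(r+1)+i) = v})" for p :: "bool list"
  define G where "G f = map (\<lambda>m. (m div (r+1) \<in> f (m mod (r+1))) = v) [0..<(r+1)*n]"
    for f :: "nat \<Rightarrow> nat set"
  have modr: "m mod (r+1) \<le> r" for m
    by (metis Suc_eq_plus1 less_Suc_eq_le mod_less_divisor zero_less_Suc)
  have divn: "m div (r+1) < n" if "m < (r+1)*n" for m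
    using that by (simp add: less_mult_imp_div_less mult.commute)
  have blk: "k*(r+1)+i < (r+1)*n" if "k < n" "i \<le> r" for k i
  proof -
    have "k*(r+1)+i < (k+1)*(r+1)" using that by simp
    also have "\<dots> \<le> n*(r+1)" using that by (intro mult_right_mono) auto
    finally show ?thesis by (simp add: mult.commute)
  qed
  have dm: "(k*(r+1)+i) div (r+1) = k" "(k*(r+1)+i) mod (r+1) = i" if "i \<le> r" for k i
  proof -
    have "i < r+1" using that by simp
    then show "(k*(r+1)+i) div (r+1) = k" "(k*(r+1)+i) mod (r+1) = i"
      using dm_gen[of i "r+1" k] by blast+
  qed
  have Gnth: "G f ! (k*(r+1)+i) = ((k \<in> f i) = v)" if "k < n" "i \<le> r" for f k i
  proof -
    have "G f ! (k*(r+1)+i) = (((k*(r+1)+i) div (r+1) \<in> f ((k*(r+1)+i) mod (r+1))) = v)"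
      using blk[OF that] unfolding G_def by (simp del: div_mult_self3 div_mult_self4 mod_mult_self3 mod_mult_self4)
    then show ?thesis using dm[OF that(2)] by simp
  qed
  have "bij_betw F A2 (PiE {..r} T)"
  proof (rule bij_betw_byWitness[where f'=G])
    show "\<forall>p\<in>A2. G (F p) = p"
    proof
      fix p assume p: "p \<in> A2"
      show "G (F p) = p"
      proof (rule nth_equalityI)
        show "length (G (F p)) = length p" using p by (simp add: G_def A2_def)
        fix m assume "m < length (G (F p))"
        then have m: "m < (r+1)*n" by (simp add: G_def)
        have e: "(m div (r+1))*(r+1) + m mod (r+1) = m" by (rule div_mult_mod_eq)
        have g: "G (F p) ! m = ((m div (r+1) \<in> F p (m mod (r+1))) = v)" using m by (simp add: G_def)
        have Fm: "F p (m mod (r+1)) = {k. k<n \<and> p!(k*(r+1) + m mod (r+1)) = v}"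
          using modr[of m] by (simp add: F_def)
        have h: "(m div (r+1) \<in> F p (m mod (r+1))) = (p ! m = v)"
          unfolding Fm using divn[OF m] e by simp
        show "G (F p) ! m = p ! m" using g h by (cases v) simp_all
      qed
    qed
    show "\<forall>f\<in>PiE {..r} T. F (G f) = f"
    proof
      fix f assume f: "f \<in> PiE {..r} T"
      show "F (G f) = f"
      proof
        fix i
        show "F (G f) i = f i"
        proof (cases "i \<le> r")
          case True
          then have "f i \<in> T i" using f by (auto simp: PiE_iff)
          then have sub: "f i \<subseteq> {..<n}" by (auto simp: T_def split: if_splits)
          have "F (G f) i = {k. k<n \<and> G f!(k*(r+1)+i) = v}" using True by (simp add: F_def)
          also have "\<dots> = {k. k<n \<and> k \<in> f i}"
          proof (rule Collect_cong)
            fix k show "(k<n \<and> G f!(k*(r+1)+i) = v) = (k<n \<and> k \<in> f i)"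
              using Gnth[of k i f] True by (cases v) auto
          qed
          also have "\<dots> = f i" using sub by auto
          finally show ?thesis .
        next
          case False
          then have ni: "i \<notin> {..r}" by simp
          have "f i = undefined" by (rule PiE_arb[OF f ni])
          moreover have "F (G f) i = undefined" using ni unfolding F_def restrict_def by simp
          ultimately show ?thesis by simp
        qed
      qed
    qed
    show "F ` A2 \<subseteq> PiE {..r} T"
    proof
      fix X assume "X \<in> F ` A2"
      then obtain p where p: "p \<in> A2" "X = F p" by auto
      have len: "length p = (r+1)*n" using p by (simp add: A2_def)
      have "F p i \<in> T i" if i: "i \<le> r" for i
      proof -
        have cc: "\<forall>i\<le>r. card {m. m < length p \<and> p!m = v \<and> m mod (r+1) = i} = c i"
          using p(1) unfolding A2_def by blast
        have "F p i = {k. k < n \<and> p ! (k*(r+1)+i) = v}" using i by (simp add: F_def)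
        then have "card (F p i) = card {m. m < length p \<and> p!m = v \<and> m mod (r+1) = i}"
          using class_count_block[OF len i, of v] by simp
        then have "card (F p i) = c i" using cc i by simp
        moreover have "i = 0 \<Longrightarrow> 0 \<in> F p i" using p n by (simp add: A2_def F_def)
        ultimately show ?thesis using i by (auto simp: T_def F_def)
      qed
      then show "X \<in> PiE {..r} T" using p by (auto simp: F_def)
    qed
    show "G ` PiE {..r} T \<subseteq> A2"
    proof
      fix X assume "X \<in> G ` PiE {..r} T"
      then obtain f where f: "f \<in> PiE {..r} T" "X = G f" by auto
      have len: "length (G f) = (r+1)*n" by (simp add: G_def)
      have "f 0 \<in> T 0" using f by (auto simp: PiE_iff)
      then have "0 \<in> f 0" by (auto simp: T_def)
      then have g0: "G f ! 0 = v" using Gnth[of 0 0 f] n by simp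
      have "card {m. m < length (G f) \<and> G f!m = v \<and> m mod (r+1) = i} = c i" if i: "i \<le> r" for i
      proof -
        have "f i \<in> T i" using f i by (auto simp: PiE_iff)
        then have sub: "f i \<subseteq> {..<n}" "card (f i) = c i" by (auto simp: T_def split: if_splits)
        have "card {m. m < length (G f) \<and> G f!m = v \<and> m mod (r+1) = i} = card {k. k < n \<and> G f ! (k*(r+1)+i) = v}"
          by (rule class_count_block[OF len i])
        also have "{k. k < n \<and> G f ! (k*(r+1)+i) = v} = {k. k < n \<and> k \<in> f i}"
        proof (rule Collect_cong)
          fix k show "(k<n \<and> G f!(k*(r+1)+i) = v) = (k<n \<and> k \<in> f i)"
            using Gnth[of k i f] i by (cases v) auto
        qed
        also have "{k. k < n \<and> k \<in> f i} = f i" using sub by auto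
        finally show ?thesis using sub by simp
      qed
      then show "X \<in> A2" using f len g0 by (simp add: A2_def)
    qed
  qed
  then have "card A2 = card (PiE {..r} T)" by (rule bij_betw_same_card)
  also have "\<dots> = (\<Prod>i\<le>r. card (T i))" by (simp add: card_PiE)
  also have "{..r} = insert 0 {1..r}" by auto
  also have "(\<Prod>i\<in>insert 0 {1..r}. card (T i)) = card (T 0) * (\<Prod>i\<in>{1..r}. card (T i))"
    by (simp add: prod.insert)
  also have "card (T 0) = (n - 1) choose (c 0 - 1)" using card_T0[OF c0 n] by (simp add: T_def)
  also have "(\<Prod>i\<in>{1..r}. card (T i)) = (\<Prod>i\<in>{1..r}. n choose c i)"
    by (rule prod.cong) (auto simp: T_def n_subsets)
  finally show ?thesis unfolding A2_def .
qed



lemma real_div_helper: "(x::real) * a = b * c \<Longrightarrow> a \<noteq> 0 \<Longrightarrow> x = 1 / a * b * c"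
  by (simp add: field_simps)


lemma final_count:
  fixes v :: bool and c :: "nat \<Rightarrow> nat"
  assumes n: "n \<ge> 1" and c0: "c 0 \<ge> 1" and tot: "(\<Sum>i\<le>r. c i) = (if v then r*n+1 else n-1)"
    and j: "j \<in> {1..c 0}"
  shows "real (card {p \<in> lpaths r n. p!0 = v \<and>
            (\<forall>i\<le>r. card {m. m < length p \<and> p!m = v \<and> m mod (r+1) = i} = c i) \<and>
            card {m. m < length p \<and> p!m = v \<and> m mod (r+1) = 0 \<and> height r p m \<le> 0} = j})
     = 1 / real (c 0) * real ((n - 1) choose (c 0 - 1)) * (\<Prod>i\<in>{1..r}. real (n choose c i))"
proof -
  have e: "{p \<in> lpaths r n. p!0 = v \<and>
            (\<forall>i\<le>r. card {m. m < length p \<and> p!m = v \<and> m mod (r+1) = i} = c i) \<and>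
            card {m. m < length p \<and> p!m = v \<and> m mod (r+1) = 0 \<and> height r p m \<le> 0} = j}
        = {p \<in> Aset v r n c. stat v r p = j}"
    unfolding Aset_def stat_def mem_Collect_eq conj_assoc by (rule refl)
  have u: "card {p \<in> Aset v r n c. stat v r p = j} * c 0 = card (Aset v r n c)"
    by (rule uniform[where j=j and c=c and v=v and r=r and n=n, OF j])
  have ca: "card (Aset v r n c) = ((n - 1) choose (c 0 - 1)) * (\<Prod>i\<in>{1..r}. n choose c i)"
    unfolding Aset_eq[OF n tot] by (rule card_A2[where n=n and c=c and r=r and v=v, OF n c0])
  have nat: "card {p \<in> Aset v r n c. stat v r p = j} * c 0 = ((n - 1) choose (c 0 - 1)) * (\<Prod>i\<in>{1..r}. n choose c i)"
    using u ca by (rule trans)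
  have "real (card {p \<in> Aset v r n c. stat v r p = j} * c 0) = real (((n - 1) choose (c 0 - 1)) * (\<Prod>i\<in>{1..r}. n choose c i))"
    using nat by (rule arg_cong)
  then have "real (card {p \<in> Aset v r n c. stat v r p = j}) * real (c 0) =
     real ((n - 1) choose (c 0 - 1)) * (\<Prod>i\<in>{1..r}. real (n choose c i))"
    by (simp only: of_nat_mult of_nat_prod)
  then have "real (card {p \<in> Aset v r n c. stat v r p = j}) =
     1 / real (c 0) * real ((n - 1) choose (c 0 - 1)) * (\<Prod>i\<in>{1..r}. real (n choose c i))"
    by (rule real_div_helper) (use c0 in simp)
  then show ?thesis unfolding e .
qed


theorem theorem16:
  fixes r n :: nat and ns :: "nat \<Rightarrow> nat"
  assumes "r \<ge> 1" and "n \<ge> 1"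
  shows
   "((\<forall>i\<le>r. ns i \<ge> 1) \<and> ns 0 \<ge> 2 \<and> (\<Sum>i\<le>r. ns i - 1) = n - 1 \<longrightarrow>
      (\<forall>j\<in>{1..ns 0 - 1}.
        real (card {p \<in> lpaths r n. \<not> p ! 0 \<and>
            (\<forall>i\<le>r. card {m. m < length p \<and> \<not> p ! m \<and> m mod (r + 1) = i} = ns i - 1) \<and>
            card {m. m < length p \<and> \<not> p ! m \<and> m mod (r + 1) = 0 \<and> height r p m \<le> 0} = j})
        = 1 / real (ns 0 - 1) * real ((n - 1) choose (ns 0 - 2)) *
          (\<Prod>i\<in>{1..r}. real (n choose (ns i - 1)))))
    \<and>
    (ns 0 \<ge> 1 \<and> (\<Sum>i\<le>r. ns i) = r * n + 1 \<longrightarrow>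
      (\<forall>j\<in>{1..ns 0}.
        real (card {p \<in> lpaths r n. p ! 0 \<and>
            (\<forall>i\<le>r. card {m. m < length p \<and> p ! m \<and> m mod (r + 1) = i} = ns i) \<and>
            card {m. m < length p \<and> p ! m \<and> m mod (r + 1) = 0 \<and> height r p m \<le> 0} = j})
        = 1 / real (ns 0) * real ((n - 1) choose (ns 0 - 1)) *
          (\<Prod>i\<in>{1..r}. real (n choose ns i))))"
  proof (intro conjI impI ballI)
  fix j assume H: "(\<forall>i\<le>r. ns i \<ge> 1) \<and> ns 0 \<ge> 2 \<and> (\<Sum>i\<le>r. ns i - 1) = n - 1"
    and j: "j \<in> {1..ns 0 - 1}"
  have t: "(\<Sum>i\<le>r. ns i - 1) = (if False then r*n+1 else n-1)" using H by simp
  have c0: "ns 0 - 1 \<ge> 1" using H by linarith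
  note F = final_count[where n=n and c="\<lambda>i. ns i - 1" and r=r and v=False and j=j, OF assms(2) c0 t j]
  have e2: "ns 0 - 1 - 1 = ns 0 - 2" by simp
  show "real (card {p \<in> lpaths r n. \<not> p ! 0 \<and>
            (\<forall>i\<le>r. card {m. m < length p \<and> \<not> p ! m \<and> m mod (r + 1) = i} = ns i - 1) \<and>
            card {m. m < length p \<and> \<not> p ! m \<and> m mod (r + 1) = 0 \<and> height r p m \<le> 0} = j})
        = 1 / real (ns 0 - 1) * real ((n - 1) choose (ns 0 - 2)) *
          (\<Prod>i\<in>{1..r}. real (n choose (ns i - 1)))"
    using F unfolding e2 by (simp only: eq_False)
next
  fix j assume H: "ns 0 \<ge> 1 \<and> (\<Sum>i\<le>r. ns i) = r * n + 1" and j: "j \<in> {1..ns 0}"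
  have t: "(\<Sum>i\<le>r. ns i) = (if True then r*n+1 else n-1)" using H by simp
  have c0: "ns 0 \<ge> 1" using H by simp
  note F = final_count[where n=n and c=ns and r=r and v=True and j=j, OF assms(2) c0 t j]
  show "real (card {p \<in> lpaths r n. p ! 0 \<and>
            (\<forall>i\<le>r. card {m. m < length p \<and> p ! m \<and> m mod (r + 1) = i} = ns i) \<and>
            card {m. m < length p \<and> p ! m \<and> m mod (r + 1) = 0 \<and> height r p m \<le> 0} = j})
        = 1 / real (ns 0) * real ((n - 1) choose (ns 0 - 1)) *
          (\<Prod>i\<in>{1..r}. real (n choose ns i))"
    using F by (simp only: eq_True)
qed


end
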